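(* For $a\in\mathbb{Q}$ let $\mathcal{R}_a$ be the rectangle with vertices $P_1=(0,0)$, $P_2=(0,1)$, $P_3=(a,0)$, $P_4=(a,1)$. Then the set of $a\in\mathbb{Q}$ for which there are infinitely many points $(x,y)\in\mathbb{Q}^2$ whose Euclidean distances to each of $P_1,P_2,P_3,P_4$ are rational numbers is dense in $\mathbb{R}$.
   Context: No further context is needed. *)

theory Defs
  imports "HOL-Analysis.Analysis"
begin

definition eucl_dist :: "real \<times> real \<Rightarrow> real \<times> real \<Rightarrow> real" where
  "eucl_dist p q = sqrt ((fst p - fst q)^2 + (snd p - snd q)^2)"

definition rect_vertices :: "real \<Rightarrow> (real \<times> real) set" where
  "rect_vertices a = {(0,0), (0,1), (a,0), (a,1)}"

definition good_points :: "real \<Rightarrow> (real \<times> real) set" where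
  "good_points a = {(x,y). x \<in> \<rat> \<and> y \<in> \<rat> \<and>
      (\<forall>P \<in> rect_vertices a. eucl_dist (x,y) P \<in> \<rat>)}"

definition good_params :: "real set" where
  "good_params = {a \<in> \<rat>. infinite (good_points a)}"

end

theory Submission
  imports Defs
begin

lemma chord_identity:
  fixes p1 p2 q1 q2 R :: real
  assumes u: "p1^2 + p2^2 = 1" and v: "q1^2 + q2^2 = 1"
  shows "(R*(p1^2-p2^2) - R*(q1^2-q2^2))^2 + (2*R*p1*p2 - 2*R*q1*q2)^2
         = (2*R*(p2*q1-p1*q2))^2"
proof -
  have "(R*(p1^2-p2^2) - R*(q1^2-q2^2))^2 + (2*R*p1*p2 - 2*R*q1*q2)^2
        = R^2 * (((p1-q1)^2+(p2-q2)^2)*((p1+q1)^2+(p2+q2)^2))"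
    by (simp add: power2_eq_square algebra_simps)
  also have "((p1-q1)^2+(p2-q2)^2)*((p1+q1)^2+(p2+q2)^2)
        = 4*(p2*q1-p1*q2)^2"
    using u v by algebra
  finally show ?thesis by (simp add: power2_eq_square algebra_simps)
qed

lemma chord_dist:
  fixes p1 p2 q1 q2 R c1 c2 :: real
  assumes u: "p1^2 + p2^2 = 1" and v: "q1^2 + q2^2 = 1"
  shows "eucl_dist (c1 + R*(p1^2-p2^2), c2 + 2*R*p1*p2) (c1 + R*(q1^2-q2^2), c2 + 2*R*q1*q2)
        = \<bar>2*R*(p2*q1-p1*q2)\<bar>"
proof -
  have "(c1 + R*(p1^2-p2^2) - (c1 + R*(q1^2-q2^2)))^2 + (c2 + 2*R*p1*p2 - (c2 + 2*R*q1*q2))^2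
      = (2*R*(p2*q1-p1*q2))^2"
    using chord_identity[OF u v, of R] by simp
  then show ?thesis unfolding eucl_dist_def by simp
qed

lemma onept_pos: "1 + (t::real)^2 > 0"
  using zero_le_power2[of t] by linarith

lemma onept_ne: "1 + (t::real)^2 \<noteq> 0" "1 + (t::real)^2 > 0" "(1 + (t::real)^2)^2 \<noteq> 0"
  using onept_pos[of t] by auto

definition F :: "real \<Rightarrow> real" where "F k = (k^2 - 1) / (2*k)"

lemma w_inj:
  fixes t1 t2 :: real
  assumes "0 < t1" "t1 < 1" "0 < t2" "t2 < 1" "t1/(1+t1^2) = t2/(1+t2^2)"
  shows "t1 = t2"
proof -
  have d1: "1+t1^2 \<noteq> 0" "1+t2^2 \<noteq> 0" by (simp_all add: onept_ne)
  have "t1*(1+t2^2) = t2*(1+t1^2)" using assms(5) d1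
    by (simp add: divide_eq_eq eq_divide_eq)
  hence "(t1 - t2)*(1 - t1*t2) = 0" by (simp add: power2_eq_square algebra_simps)
  moreover have "t1*t2 < 1" using assms
    using mult_strict_mono[of t1 1 t2 1] by simp
  ultimately show ?thesis by simp
qed

lemmas RQ = Rats_add Rats_mult Rats_diff Rats_divide Rats_minus_iff Rats_power Rats_abs_iff

lemma verts:
  fixes s m a R :: real
  assumes "s > 0" "m > 0" "m^2+1 = s^2" "a = (m^2-1)/(2*m)" "R = s^2/(4*m)"
  shows "(0::real,0::real) = (a/2 + R*((1/s)^2 - (-m/s)^2), 1/2 + 2*R*(1/s)*(-m/s))"
    and "(0::real,1::real) = (a/2 + R*((1/s)^2 - (m/s)^2), 1/2 + 2*R*(1/s)*(m/s))"
    and "(a,0::real) = (a/2 + R*((m/s)^2 - (-1/s)^2), 1/2 + 2*R*(m/s)*(-1/s))"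
    and "(a,1::real) = (a/2 + R*((m/s)^2 - (1/s)^2), 1/2 + 2*R*(m/s)*(1/s))"
    and "(1/s)^2 + (-m/s)^2 = 1" "(1/s)^2 + (m/s)^2 = 1"
       "(m/s)^2 + (-1/s)^2 = 1" "(m/s)^2 + (1/s)^2 = 1"
  using assms by (simp_all add: field_simps power2_eq_square; algebra)+

lemma unitU: "((1-t^2)/(1+t^2))^2 + (2*t/(1+(t::real)^2))^2 = 1"
proof -
  have d: "(1 + t^2)^2 \<noteq> 0" by (rule onept_ne)
  have e: "((1-t^2)/(1+t^2))^2 + (2*t/(1+(t::real)^2))^2 = ((1-t^2)^2 + (2*t)^2)/(1+t^2)^2"
    by (simp only: power_divide add_divide_distrib[symmetric])
  have f: "(1-t^2)^2 + (2*t)^2 = (1+t^2)^2" by (simp add: power2_eq_square algebra_simps)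
  show ?thesis unfolding e f using d by (rule divide_self)
qed

lemma gU: "((1-t^2)/(1+t^2))^2 - (2*t/(1+(t::real)^2))^2 = 1 - 8*(t/(1+t^2))^2"
proof -
  have d: "(1 + t^2)^2 \<noteq> 0" by (rule onept_ne)
  have e1: "((1-t^2)/(1+t^2))^2 - (2*t/(1+(t::real)^2))^2 = ((1-t^2)^2 - (2*t)^2)/(1+t^2)^2"
    by (simp only: power_divide diff_divide_distrib[symmetric])
  have e2: "1 - 8*(t/(1+t^2))^2 = ((1+t^2)^2 - 8*t^2)/(1+t^2)^2"
    using d by (simp add: power_divide diff_divide_distrib)
  have f: "(1-t^2)^2 - (2*t)^2 = (1+t^2)^2 - 8*t^2" by (simp add: power2_eq_square algebra_simps)
  show ?thesis unfolding e1 e2 f ..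
qed

lemma good:
  assumes kQ: "k \<in> \<rat>" and kpos: "k > 0" and mpos: "F k > 0"
  shows "F (F k) \<in> good_params"
proof -
  define m where "m = F k"
  define s where "s = (k^2+1)/(2*k)"
  define a where "a = F m"
  define R where "R = s^2/(4*m)"
  have mQ: "m \<in> \<rat>" unfolding m_def F_def using kQ by (simp add: RQ)
  have sQ: "s \<in> \<rat>" unfolding s_def using kQ by (simp add: RQ)
  have aQ: "a \<in> \<rat>" unfolding a_def F_def using mQ by (simp add: RQ)
  have RQ': "R \<in> \<rat>" unfolding R_def using mQ sQ by (simp add: RQ)
  have m0: "m > 0" using mpos m_def by simp
  have "k^2+1 > 0" using onept_pos[of k] by simp
  hence s0: "s > 0" unfolding s_def using kpos by simp
  have ms: "m^2 + 1 = s^2" using kpos unfolding m_def s_def F_def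
    by (simp add: field_simps power2_eq_square)
  have R0: "R > 0" unfolding R_def using m0 s0 by simp
  have a_eq: "a = (m^2-1)/(2*m)" unfolding a_def F_def by simp
  note V = verts[OF s0 m0 ms a_eq R_def]
  define X where "X = (\<lambda>n::nat. let t = 1/(real n + 2) in
       (a/2 + R*(((1-t^2)/(1+t^2))^2 - (2*t/(1+t^2))^2), 1/2 + 2*R*((1-t^2)/(1+t^2))*(2*t/(1+t^2))))"
  have XG: "X n \<in> good_points a" for n
  proof -
    define t where "t = 1/(real n + 2)"
    define u1 where "u1 = (1-t^2)/(1+t^2)"
    define u2 where "u2 = 2*t/(1+t^2)"
    have tQ: "t \<in> \<rat>" unfolding t_def by (simp add: RQ)
    have uQ: "u1 \<in> \<rat>" "u2 \<in> \<rat>" unfolding u1_def u2_def using tQ by (simp_all add: RQ)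
    have uu: "u1^2 + u2^2 = 1" unfolding u1_def u2_def by (rule unitU)
    have Xn: "X n = (a/2 + R*(u1^2 - u2^2), 1/2 + 2*R*u1*u2)"
      unfolding X_def t_def u1_def u2_def Let_def by simp
    have D1: "eucl_dist (X n) (0,0) \<in> \<rat>"
      apply (subst V(1)) apply (subst Xn) apply (subst chord_dist[OF uu V(5)])
      using uQ RQ' sQ mQ by (simp add: RQ)
    have D2: "eucl_dist (X n) (0,1) \<in> \<rat>"
      apply (subst V(2)) apply (subst Xn) apply (subst chord_dist[OF uu V(6)])
      using uQ RQ' sQ mQ by (simp add: RQ)
    have D3: "eucl_dist (X n) (a,0) \<in> \<rat>"
      apply (subst V(3)) apply (subst Xn) apply (subst chord_dist[OF uu V(7)])
      using uQ RQ' sQ mQ by (simp add: RQ)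
    have D4: "eucl_dist (X n) (a,1) \<in> \<rat>"
      apply (subst V(4)) apply (subst Xn) apply (subst chord_dist[OF uu V(8)])
      using uQ RQ' sQ mQ by (simp add: RQ)
    have "fst (X n) \<in> \<rat>" "snd (X n) \<in> \<rat>"
      unfolding Xn using aQ RQ' uQ by (simp_all add: RQ)
    then show ?thesis using D1 D2 D3 D4 unfolding good_points_def rect_vertices_def
      by (cases "X n") auto
  qed
  have injX: "inj X"
  proof (rule injI)
    fix n1 n2 assume eq: "X n1 = X n2"
    define t1 where "t1 = 1/(real n1 + 2)"
    define t2 where "t2 = 1/(real n2 + 2)"
    from eq have "R*(((1-t1^2)/(1+t1^2))^2 - (2*t1/(1+t1^2))^2) = R*(((1-t2^2)/(1+t2^2))^2 - (2*t2/(1+t2^2))^2)"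
      unfolding X_def t1_def t2_def Let_def by simp
    hence "(t1/(1+t1^2))^2 = (t2/(1+t2^2))^2" using R0 unfolding gU by simp
    moreover have "t1/(1+t1^2) > 0" "t2/(1+t2^2) > 0"
      unfolding t1_def t2_def by (simp_all add: onept_ne)
    ultimately have "t1/(1+t1^2) = t2/(1+t2^2)"
      by (simp add: power2_eq_iff)
    moreover have "0 < t1" "t1 < 1" "0 < t2" "t2 < 1" unfolding t1_def t2_def by simp_all
    ultimately have "t1 = t2" using w_inj by blast
    thus "n1 = n2" unfolding t1_def t2_def by simp
  qed
  have "infinite (range X)" using injX finite_imageD by blast
  moreover have "range X \<subseteq> good_points a" using XG by auto
  ultimately have "infinite (good_points a)" using finite_subset by blast
  thus ?thesis unfolding good_params_def using aQ a_def m_def by simp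
qed

lemma Finv:
  fixes x :: real
  shows "x + sqrt (x^2+1) > 0" "F (x + sqrt (x^2+1)) = x"
proof -
  have s2: "(sqrt (x^2+1))^2 = x^2+1" using onept_pos[of x] by simp
  have "\<bar>x\<bar> < sqrt (x^2+1)"
    using real_sqrt_less_mono[of "x^2" "x^2+1"] by simp
  thus q0: "x + sqrt (x^2+1) > 0" by linarith
  have "(x + sqrt (x^2+1))^2 - 1 = 2*x*(x + sqrt (x^2+1))"
    using s2 by (simp add: power2_eq_square algebra_simps)
  thus "F (x + sqrt (x^2+1)) = x" unfolding F_def using q0
    by (simp add: field_simps)
qed

lemma F_cont: "x \<noteq> 0 \<Longrightarrow> isCont F x"
  unfolding F_def by (intro continuous_intros) auto

theorem theorem2p1:
  shows "closure good_params = UNIV"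
proof -
  have "r \<in> closure good_params" for r
  proof -
    define m0 where "m0 = r + sqrt (r^2+1)"
    define k0 where "k0 = m0 + sqrt (m0^2+1)"
    have m0p: "m0 > 0" and Fm0: "F m0 = r" unfolding m0_def using Finv by auto
    have k0p: "k0 > 0" and Fk0: "F k0 = m0" unfolding k0_def using Finv by auto
    have c1: "isCont F k0" using F_cont k0p by simp
    have c2: "isCont (\<lambda>k. F (F k)) k0"
      using isCont_o2[OF c1] F_cont[of "F k0"] Fk0 m0p by simp
    show ?thesis unfolding closure_approachable
    proof (intro allI impI)
      fix e :: real assume e: "e > 0"
      obtain d1 where d1: "d1 > 0" "\<forall>y. dist y k0 < d1 \<longrightarrow> dist (F (F y)) (F (F k0)) < e"
        using c2 e unfolding continuous_at_eps_delta by blast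
      obtain d2 where d2: "d2 > 0" "\<forall>y. dist y k0 < d2 \<longrightarrow> dist (F y) (F k0) < m0"
        using c1 m0p unfolding continuous_at_eps_delta by blast
      define d where "d = min d1 (min d2 k0)"
      have d0: "d > 0" unfolding d_def using d1 d2 k0p by simp
      obtain q where q: "q \<in> \<rat>" "k0 - d < q" "q < k0 + d"
        using Rats_dense_in_real[of "k0 - d" "k0 + d"] d0 by auto
      have dq: "dist q k0 < d" using q by (simp add: dist_real_def abs_less_iff)
      have qp: "q > 0" using q d_def by linarith
      have "dist (F q) (F k0) < m0" using d2 dq d_def by simp
      hence Fqp: "F q > 0" using Fk0 by (simp add: dist_real_def abs_less_iff)
      have "dist (F (F q)) r < e" using d1 dq d_def Fk0 Fm0 by simp
      moreover have "F (F q) \<in> good_params" using good[OF q(1) qp Fqp] .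
      ultimately show "\<exists>y\<in>good_params. dist y r < e" by blast
    qed
  qed
  thus ?thesis by auto
qed

end
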